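(* Let $q\ge2$, $k\in[1:q]$, and let $\mathbf{u}$ be a probability distribution on $[1:q]$ with $|\mathrm{supp}(\mathbf{u})|=k$. Then for all sufficiently large $n$, $$M_{n,\mathbf{u}}(\mathbf{t})\le\frac{2}{n^{(k-1)/2}\sqrt{\prod_{i\in\mathrm{supp}(\mathbf{u})}u_i}}\qquad\forall\mathbf{t}\in\mathcal{N}_{q,n}.$$
   Context: $\mathcal{N}_{q,n}=\{\mathbf{t}\in\mathbb{Z}_{\ge0}^q:\sum_it_i=n\}$; $M_{n,\mathbf{u}}(\mathbf{t})=\frac{n!}{t_1!\cdots t_q!}\prod_iu_i^{t_i}$ (with $0^0=1$); $\mathrm{supp}(\mathbf{u})=\{i:u_i>0\}$. *)

theory Defs
  imports "HOL-Analysis.Analysis"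
begin

definition compositions :: "nat \<Rightarrow> nat \<Rightarrow> (nat \<Rightarrow> nat) set" where
  "compositions q n = {t. (\<forall>i. i \<notin> {1..q} \<longrightarrow> t i = 0) \<and> (\<Sum>i\<in>{1..q}. t i) = n}"

text \<open>Multinomial probability M_{n,u}(t); note 0 ^ 0 = 1 in Isabelle.\<close>
definition multinomial_prob :: "nat \<Rightarrow> nat \<Rightarrow> (nat \<Rightarrow> real) \<Rightarrow> (nat \<Rightarrow> nat) \<Rightarrow> real" where
  "multinomial_prob q n u t =
     fact n / (\<Prod>i\<in>{1..q}. fact (t i)) * (\<Prod>i\<in>{1..q}. u i ^ t i)"

definition supp :: "nat \<Rightarrow> (nat \<Rightarrow> real) \<Rightarrow> nat set" where
  "supp q u = {i\<in>{1..q}. u i > 0}"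

end

theory Submission
  imports Defs "HOL-Real_Asymp.Real_Asymp"
begin


lemma ln_lower_aux:
  fixes x :: real assumes "0 \<le> x"
  shows "2 * x / (2 + x) \<le> ln (1 + x)"
proof -
  let ?f = "\<lambda>x::real. ln (1 + x) - 2 * x / (2 + x)"
  have "?f 0 \<le> ?f x"
  proof (rule DERIV_nonneg_imp_nondecreasing[OF assms])
    fix y :: real assume y: "0 \<le> y" "y \<le> x"
    have "DERIV ?f y :> (1 / (1 + y) - (2 * (2 + y) - 2 * y) / (2 + y)^2)"
      using y by (auto intro!: derivative_eq_intros simp: power2_eq_square)
    moreover have "1 / (1 + y) - (2 * (2 + y) - 2 * y) / (2 + y)^2 = y^2 / ((1+y) * (2+y)^2)"
      using y by (simp add: divide_simps power2_eq_square) (simp add: algebra_simps)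
    moreover have "y^2 / ((1+y) * (2+y)^2) \<ge> 0" using y by simp
    ultimately show "\<exists>d. DERIV ?f y :> d \<and> d \<ge> 0" by metis
  qed
  then show ?thesis by simp
qed

lemma ln_upper_aux:
  fixes x :: real assumes "0 \<le> x"
  shows "ln (1 + x) \<le> x * (2 + x) / (2 * (1 + x))"
proof -
  let ?f = "\<lambda>x::real. ln (1 + x) - x * (2 + x) / (2 * (1 + x))"
  have "?f x \<le> ?f 0"
  proof (rule DERIV_nonpos_imp_nonincreasing[OF assms])
    fix y :: real assume y: "0 \<le> y" "y \<le> x"
    have "DERIV ?f y :> (1 / (1 + y) - (((2 + y) + y) * (2 * (1 + y)) - y * (2 + y) * 2) / (2 * (1 + y))^2)"
      using y by (auto intro!: derivative_eq_intros simp: power2_eq_square)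
    moreover have "1 / (1 + y) - (((2 + y) + y) * (2 * (1 + y)) - y * (2 + y) * 2) / (2 * (1 + y))^2 = (0 - y^2) / (2 * (1+y)^2)"
      using y by (simp add: divide_simps power2_eq_square) (simp add: algebra_simps)
    moreover have "(0 - y^2) / (2 * (1+y)^2) \<le> 0" using y by simp
    ultimately show "\<exists>d. DERIV ?f y :> d \<and> d \<le> 0" by metis
  qed
  then show ?thesis by simp
qed

lemma d_bounds:
  fixes m :: nat assumes m: "m \<ge> 1"
  shows "0 \<le> (real m + 1/2) * (ln (real m+1) - ln (real m)) - 1"
    and "(real m + 1/2) * (ln (real m+1) - ln (real m)) - 1 \<le> 1 / (4 * real m * (real m+1))"
proof -
  have mp: "(0::real) < m" using m by simp
  have e: "ln (real m + 1) - ln m = ln (1 + 1 / m)"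
  proof -
    have "1 + 1 / real m = (real m + 1) / m" using mp by (simp add: field_simps)
    then show ?thesis using mp by (simp add: ln_div)
  qed
  have l: "2 * (1/m) / (2 + 1/m) \<le> ln (1 + 1/m)" by (rule ln_lower_aux) simp
  have u: "ln (1 + 1/m) \<le> (1/m) * (2 + 1/m) / (2 * (1 + 1/m))" by (rule ln_upper_aux) simp
  have "(m + 1/2) * (2 * (1/m) / (2 + 1/m)) = 1" using mp by (simp add: field_simps)
  moreover have "(m + 1/2) * ((1/m) * (2 + 1/m) / (2 * (1 + 1/m))) = 1 + 1 / (4 * real m * (real m+1))"
  proof -
    have "real m + 1 > 0" using mp by simp
    then show ?thesis using mp by (simp add: divide_simps) (simp add: algebra_simps)
  qed
  moreover have "(0::real) \<le> m + 1/2" by simp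
  ultimately show "0 \<le> (real m + 1/2) * (ln (real m+1) - ln (real m)) - 1"
    and "(real m + 1/2) * (ln (real m+1) - ln (real m)) - 1 \<le> 1 / (4 * real m * (real m+1))"
    using mult_left_mono[OF l, of "m+1/2"] mult_left_mono[OF u, of "m+1/2"] e by (simp_all add: mult.commute)
qed

definition sfun :: "nat \<Rightarrow> real" where
  "sfun m = ln (fact m) - (m + 1/2) * ln m + m"

lemma sfun_step: "m \<ge> 1 \<Longrightarrow> sfun m - sfun (Suc m) = (m + 1/2) * (ln (m+1) - ln m) - 1"
proof -
  assume m: "m \<ge> 1"
  have "ln (fact (Suc m) :: real) = ln (real m + 1) + ln (fact m)"
    by (simp add: ln_mult fact_gt_zero)
  then show ?thesis unfolding sfun_def by (simp add: algebra_simps)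
qed

lemma sfun_bounds: "m \<ge> 1 \<Longrightarrow> 3/4 + 1 / (4 * m) \<le> sfun m \<and> sfun m \<le> 1"
proof (induction m rule: nat_induct_at_least)
  case base
  then show ?case by (simp add: sfun_def)
next
  case (Suc m)
  have a: "0 \<le> sfun m - sfun (Suc m)" "sfun m - sfun (Suc m) \<le> 1 / (4 * real m * (real m+1))"
    using d_bounds[OF Suc.hyps] sfun_step[OF Suc.hyps] by linarith+
  have mp: "(0::real) < m" using Suc.hyps by simp
  have "3/4 + 1 / (4 * real m) - 1 / (4 * real m * (real m+1)) = 3/4 + 1 / (4 * real (Suc m))"
  proof -
    have "real m + 1 > 0" using mp by simp
    then show ?thesis using mp by (simp add: divide_simps) (simp add: algebra_simps)
  qed
  then show ?case using a Suc.IH by linarith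
qed

lemma exp_pow_ln: "n > 0 \<Longrightarrow> exp (real n * ln (real n)) = real n ^ n"
  by (simp add: exp_of_nat_mult del: exp_ln_iff)

lemma exp_half_ln: "n > 0 \<Longrightarrow> exp (ln (real n) / 2) = sqrt n"
  by (metis exp_ln ln_sqrt of_nat_0_le_iff of_nat_0_less_iff real_sqrt_gt_zero)

lemma fact_exp_form:
  assumes "n \<ge> 1"
  shows "exp ((n + 1/2) * ln n - n) = sqrt n * (n / exp 1) ^ n"
proof -
  have np: "n > 0" using assms by simp
  have "exp ((n + 1/2) * ln n - n) = exp (real n * ln n) * exp (ln n / 2) / exp (real n * 1)"
    by (simp add: exp_add[symmetric] exp_diff[symmetric] algebra_simps)
  also have "\<dots> = real n ^ n * sqrt n / exp 1 ^ n"
    using np by (simp only: exp_pow_ln[OF np] exp_half_ln[OF np]) (simp only: exp_of_nat_mult)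
  finally show ?thesis by (simp add: power_divide)
qed

lemma stirling_upper:
  assumes "n \<ge> 1"
  shows "fact n \<le> exp 1 * sqrt n * (n / exp 1) ^ n"
proof -
  have "ln (fact n) \<le> 1 + ((n + 1/2) * ln n - n)"
    using sfun_bounds[OF assms] unfolding sfun_def by simp
  then have "exp (ln (fact n)) \<le> exp (1 + ((n + 1/2) * ln n - n))" by (simp only: exp_le_cancel_iff)
  moreover have "exp (ln (fact n)) = (fact n :: real)" by (rule exp_ln) simp
  ultimately show ?thesis using fact_exp_form[OF assms]
    by (simp add: exp_add)
qed

lemma stirling_lower0:
  assumes "n \<ge> 1"
  shows "exp (3/4 + 1 / (4 * n)) * sqrt n * (n / exp 1) ^ n \<le> fact n"
proof -
  have "3/4 + 1 / (4 * n) + ((n + 1/2) * ln n - n) \<le> ln (fact n)"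
    using sfun_bounds[OF assms] unfolding sfun_def by simp
  then have "exp (3/4 + 1 / (4 * n) + ((n + 1/2) * ln n - n)) \<le> exp (ln (fact n))" by (simp only: exp_le_cancel_iff)
  moreover have "exp (ln (fact n)) = (fact n :: real)" by (rule exp_ln) simp
  ultimately show ?thesis using fact_exp_form[OF assms]
    by (simp add: exp_add mult.assoc)
qed

lemma e_ge: "exp 1 \<ge> (5/2::real)"
  using exp_lower_Taylor_quadratic[of "1::real"] by simp

lemma exp32: "exp (3/2) \<ge> (13/3::real)"
proof -
  have "(41/32::real) \<le> exp (1/4)"
    using exp_lower_Taylor_quadratic[of "1/4::real"] by (simp add: power2_eq_square)
  then have "(41/32::real)^6 \<le> exp (1/4) ^ 6" by (rule power_mono) simp
  also have "exp (1/4) ^ 6 = exp (real 6 * (1/4::real))" by (rule exp_of_nat_mult[symmetric])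
  also have "real 6 * (1/4::real) = 3/2" by simp
  finally have "(41/32::real)^6 \<le> exp (3/2)" by simp
  moreover have "(13/3::real) \<le> (41/32)^6" by (simp add: power_numeral_reduce)
  ultimately show ?thesis by linarith
qed

lemma stirling_lower:
  "2 * sqrt (real m + 1/4) * (real m / exp 1) ^ m \<le> fact m"
proof -
  consider "m = 0" | "m = 1" | "m = 2" | "m \<ge> 3" by linarith
  then show ?thesis
  proof cases
    case 1
    then show ?thesis by (simp add: real_sqrt_divide)
  next
    case 2
    have "sqrt (5/4::real) \<le> 5/4" by (rule real_le_lsqrt) (auto simp: power2_eq_square)
    then have "2 * sqrt (5/4::real) \<le> exp 1" using e_ge by linarith
    then show ?thesis using 2 by (simp add: field_simps)
  next
    case 3
    have "sqrt (9/4::real) = 3/2" by (rule real_sqrt_unique) (auto simp: power2_eq_square)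
    moreover have "exp 1 * exp 1 \<ge> (6::real)" using e_ge
      using mult_mono[OF e_ge e_ge] by simp
    ultimately show ?thesis using 3 by (simp add: field_simps power2_eq_square)
  next
    case 4
    have m1: "m \<ge> 1" using 4 by simp
    have sq: "sqrt (exp (3/2)) = exp (3/4::real)"
      by (rule real_sqrt_unique) (simp_all add: power2_eq_square exp_add[symmetric])
    have "4 * real m + 1 \<le> exp (3/2) * m"
    proof -
      have "real m \<ge> 3" using 4 by simp
      then have "(13/3) * real m \<le> exp (3/2) * m" using exp32 by (intro mult_right_mono) auto
      then show ?thesis using \<open>real m \<ge> 3\<close> by linarith
    qed
    then have "sqrt (4 * real m + 1) \<le> sqrt (exp (3/2) * m)" by simp
    also have "sqrt (exp (3/2) * m) = exp (3/4) * sqrt m" by (simp add: real_sqrt_mult sq)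
    also have "exp (3/4) \<le> exp (3/4 + 1 / (4 * real m))" by simp
    finally have A: "sqrt (4 * real m + 1) \<le> exp (3/4 + 1 / (4 * real m)) * sqrt m"
      by (simp add: mult_right_mono)
    have "2 * sqrt (real m + 1/4) = sqrt (4 * real m + 1)"
    proof -
      have "sqrt (4 * (real m + 1/4)) = sqrt 4 * sqrt (real m + 1/4)" by (rule real_sqrt_mult)
      moreover have "sqrt (4::real) = 2" by (rule real_sqrt_unique) auto
      ultimately show ?thesis by (simp add: algebra_simps)
    qed
    with A have "2 * sqrt (real m + 1/4) \<le> exp (3/4 + 1 / (4 * real m)) * sqrt m" by simp
    then have "2 * sqrt (real m + 1/4) * (real m / exp 1) ^ m \<le> exp (3/4 + 1 / (4 * real m)) * sqrt m * (real m / exp 1) ^ m"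
      by (rule mult_right_mono) simp
    also have "\<dots> \<le> fact m" by (rule stirling_lower0[OF m1])
    finally show ?thesis .
  qed
qed

lemma pow_exp_form:
  fixes a :: real assumes "a > 0" "m > 0"
  shows "a ^ m / real m ^ m * exp (real m - a) = exp (real m * ln (a / m) + real m - a)"
proof -
  have "exp (real m * ln (a / m)) = (a / m) ^ m"
    using assms by (simp add: exp_of_nat_mult del: exp_ln_iff)
  then show ?thesis by (simp add: exp_add exp_diff power_divide)
qed

lemma P_le_1:
  fixes a :: real assumes a: "a > 0"
  shows "a ^ m / real m ^ m * exp (real m - a) \<le> 1"
proof (cases "m = 0")
  case True then show ?thesis using a by simp
next
  case False
  then have mp: "m > 0" by simp
  have "ln (a / m) \<le> a / m - 1" using a mp by (intro ln_le_minus_one) simp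
  then have "real m * ln (a / m) \<le> real m * (a / m - 1)" by (rule mult_left_mono) simp
  also have "\<dots> = a - m" using mp by (simp add: field_simps)
  finally have "real m * ln (a / m) + real m - a \<le> 0" by simp
  then show ?thesis using pow_exp_form[OF a mp] by simp
qed

lemma P_small:
  fixes a :: real assumes a: "a > 0" and ma: "real m < a / 2"
  shows "a ^ m / real m ^ m * exp (real m - a) \<le> exp (- a / 16)"
proof (cases "m = 0")
  case True then show ?thesis using a by simp
next
  case False
  then have mp: "m > 0" by simp
  define r where "r = sqrt a"
  define s where "s = sqrt (real m)"
  have r: "r > 0" "r^2 = a" using a by (auto simp: r_def)
  have s: "s > 0" "s^2 = real m" using mp by (auto simp: s_def)
  have "ln (a / m) = 2 * ln (sqrt (a / m))" using a mp by (simp add: ln_sqrt)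
  also have "ln (sqrt (a / m)) \<le> sqrt (a / m) - 1" using a mp by (intro ln_le_minus_one) simp
  also have "sqrt (a / m) = r / s" by (simp add: r_def s_def real_sqrt_divide)
  finally have "real m * ln (a / m) \<le> real m * (2 * (r / s - 1))" using mp by simp
  also have "\<dots> = 2 * r * s - 2 * s^2" using s by (simp add: field_simps power2_eq_square)
  finally have L: "real m * ln (a / m) + real m - a \<le> 2 * r * s - s^2 - r^2" using s r by simp
  have "s^2 < r^2 / 2" using ma s r by simp
  then have "s < 3/4 * r"
  proof (rule contrapos_pp)
    assume "\<not> s < 3/4 * r"
    then have "(3/4 * r)^2 \<le> s^2" using r by (intro power_mono) auto
    moreover have "(3/4 * r)^2 = 9/16 * r^2" by (simp add: power_mult_distrib power2_eq_square)
    moreover have "r^2 > 0" using r(1) by simp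
    ultimately show "\<not> s^2 < r^2 / 2" by linarith
  qed
  then have "(r/4)^2 \<le> (r - s)^2" using r by (intro power_mono) auto
  then have "2 * r * s - s^2 - r^2 \<le> 0 - r^2 / 16"
    by (simp add: power2_eq_square algebra_simps)
  with L have "real m * ln (a / m) + real m - a \<le> - a / 16" using r by simp
  then show ?thesis using pow_exp_form[OF a mp] by simp
qed

lemma G_bound:
  fixes a :: real and m :: nat
  assumes a: "a > 0" and hyp: "2 * exp (- a / 16) \<le> sqrt (2 / a)"
  shows "a ^ m / real m ^ m * exp (real m - a) / sqrt (real m + 1/4) \<le> sqrt (2 / a)"
proof -
  define P where "P = a ^ m / real m ^ m * exp (real m - a)"
  have P0: "P \<ge> 0" unfolding P_def using a by simp
  have sp: "sqrt (real m + 1/4) > 0" by simp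
  show ?thesis
  proof (cases "real m < a / 2")
    case True
    have "sqrt (1/4) \<le> sqrt (real m + 1/4)" by simp
    moreover have "sqrt (1/4::real) = 1/2" by (rule real_sqrt_unique) (auto simp: power2_eq_square)
    ultimately have h: "1/2 \<le> sqrt (real m + 1/4)" by simp
    have "P / sqrt (real m + 1/4) \<le> P / (1/2)"
      using P0 h by (intro divide_left_mono) auto
    also have "\<dots> = 2 * P" by simp
    also have "\<dots> \<le> 2 * exp (- a / 16)" using P_small[OF a True] unfolding P_def by linarith
    finally show ?thesis using hyp unfolding P_def by simp
  next
    case False
    have "P / sqrt (real m + 1/4) \<le> 1 / sqrt (real m + 1/4)"
      using P_le_1[OF a] unfolding P_def by (intro divide_right_mono) auto
    also have "\<dots> \<le> 1 / sqrt (a / 2)"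
      using False a by (intro divide_left_mono) auto
    also have "\<dots> = sqrt (2 / a)" by (simp add: real_sqrt_divide)
    finally show ?thesis unfolding P_def .
  qed
qed



lemma prod_sqrt: "(\<Prod>i\<in>S. sqrt (f i)) = sqrt (\<Prod>i\<in>S. f i)"
  by (induction S rule: infinite_finite_induct) (auto simp: real_sqrt_mult)

lemma selfpow_pos: "real x ^ x > 0"
  by (cases "x = 0") auto

lemma factor_bound:
  fixes c u :: real and x :: nat
  assumes "c > 0" "u \<ge> 0"
  shows "(c / exp 1) ^ x * (u ^ x / fact x) \<le> (c * u) ^ x / real x ^ x / sqrt (real x + 1/4) / 2"
proof -
  have fpos: "(0::real) < fact x" by simp
  have sp: "sqrt (real x + 1/4) > 0" by simp
  have ep: "exp (1::real) ^ x > 0" by simp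
  have "(c / exp 1) ^ x * (u ^ x / fact x) \<le> (c / exp 1) ^ x * (u ^ x / (2 * sqrt (real x + 1/4) * (real x / exp 1) ^ x))"
    using assms stirling_lower[of x] selfpow_pos[of x] sp ep
    by (intro mult_left_mono divide_left_mono) (auto simp: power_divide)
  also have "\<dots> = (c * u) ^ x / real x ^ x / sqrt (real x + 1/4) / 2"
    using selfpow_pos[of x] sp ep by (simp add: power_divide power_mult_distrib field_simps)
  finally show ?thesis .
qed

lemma powr_half: "n > 0 \<Longrightarrow> k \<ge> 1 \<Longrightarrow> real n powr ((real k - 1) / 2) = sqrt (real n) ^ (k - 1)"
proof -
  assume n: "n > 0" and k: "k \<ge> 1"
  have "sqrt (real n) ^ (k - 1) = (real n powr (1/2)) ^ (k - 1)" using n by (simp add: powr_half_sqrt)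
  also have "\<dots> = real n powr (real (k - 1) * (1/2))" using n by (simp add: powr_power)
  also have "real (k - 1) * (1/2) = (real k - 1) / 2" using k by (simp add: of_nat_diff)
  finally show ?thesis by simp
qed

lemma main_bound:
  fixes q n :: nat and u :: "nat \<Rightarrow> real" and t :: "nat \<Rightarrow> nat"
  assumes u0: "\<forall>i\<in>{1..q}. u i \<ge> 0" and u1: "(\<Sum>i\<in>{1..q}. u i) = 1"
    and k1: "card (supp q u) \<ge> 1"
    and n1: "n \<ge> 1" and t: "t \<in> compositions q n"
    and big: "\<forall>i\<in>supp q u. 2 * exp (- (real n * u i) / 16) \<le> sqrt (2 / (real n * u i))"
  shows "multinomial_prob q n u t
             \<le> 2 / (real n powr ((real (card (supp q u)) - 1) / 2) * sqrt (\<Prod>i\<in>supp q u. u i))"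
proof -
  define S where "S = supp q u"
  define I where "I = {1..q}"
  define k where "k = card S"
  have SI: "S \<subseteq> I" and fI: "finite I" by (auto simp: S_def I_def supp_def)
  have fS: "finite S" using SI fI finite_subset by blast
  have upos: "\<And>i. i \<in> S \<Longrightarrow> u i > 0" by (auto simp: S_def supp_def)
  have uzero: "\<And>i. i \<in> I - S \<Longrightarrow> u i = 0" using u0 by (force simp: S_def supp_def I_def)
  have np: "real n > 0" using n1 by simp
  have Ppos: "(\<Prod>i\<in>S. u i) > 0" using upos by (rule prod_pos)
  have tsum: "(\<Sum>i\<in>I. t i) = n" using t by (simp add: compositions_def I_def)
  have RHS0: "0 \<le> 2 / (real n powr ((real k - 1) / 2) * sqrt (\<Prod>i\<in>S. u i))"
    using Ppos by simp
  show ?thesis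
  proof (cases "\<exists>i\<in>I - S. t i > 0")
    case True
    then obtain j where j: "j \<in> I - S" "t j > 0" by blast
    have "(\<Prod>i\<in>I. u i ^ t i) = 0"
      using fI j uzero[of j] by (intro prod_zero) (auto intro!: bexI[of _ j])
    then have "multinomial_prob q n u t = 0" by (simp add: multinomial_prob_def I_def)
    then show ?thesis using RHS0 by (simp add: S_def k_def)
  next
    case False
    then have tz: "\<And>i. i \<in> I - S \<Longrightarrow> t i = 0" by auto
    have e1: "(\<Prod>i\<in>I. fact (t i)) = (\<Prod>i\<in>S. fact (t i) :: real)"
      using fI SI tz by (intro prod.mono_neutral_right) auto
    have e2: "(\<Prod>i\<in>I. u i ^ t i) = (\<Prod>i\<in>S. u i ^ t i)"
      using fI SI tz by (intro prod.mono_neutral_right) auto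
    have tS: "(\<Sum>i\<in>S. t i) = n" using fI SI tz tsum
      by (metis (no_types, lifting) sum.mono_neutral_right)
    have uS: "(\<Sum>i\<in>S. u i) = 1" using fI SI uzero u1
      by (metis (no_types, lifting) I_def sum.mono_neutral_right)
    define G where "G i = (real n * u i) ^ t i / real (t i) ^ t i * exp (real (t i) - real n * u i) / sqrt (real (t i) + 1/4)" for i
    have Gb: "G i \<le> sqrt (2 / (real n * u i))" if "i \<in> S" for i
      unfolding G_def using G_bound[of "real n * u i" "t i"] big that upos[OF that] np by (simp add: S_def)
    have G0: "G i \<ge> 0" if "i \<in> S" for i
      unfolding G_def using upos[OF that] np by simp
    have "multinomial_prob q n u t = fact n * (\<Prod>i\<in>S. u i ^ t i / fact (t i))"
      unfolding multinomial_prob_def I_def[symmetric] e1 e2 by (simp add: prod_dividef)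
    also have "\<dots> \<le> (exp 1 * sqrt n * (\<Prod>i\<in>S. (real n / exp 1) ^ t i)) * (\<Prod>i\<in>S. u i ^ t i / fact (t i))"
    proof (rule mult_right_mono)
      show "fact n \<le> exp 1 * sqrt n * (\<Prod>i\<in>S. (real n / exp 1) ^ t i)"
        using stirling_upper[OF n1] by (simp add: power_sum[symmetric] tS)
      show "0 \<le> (\<Prod>i\<in>S. u i ^ t i / fact (t i) :: real)"
        using upos by (intro prod_nonneg divide_nonneg_pos) (auto intro!: less_imp_le)
    qed
    also have "\<dots> = exp 1 * sqrt n * (\<Prod>i\<in>S. (real n / exp 1) ^ t i * (u i ^ t i / fact (t i)))"
      unfolding prod.distrib by (simp only: mult.assoc)
    also have "\<dots> \<le> exp 1 * sqrt n * (\<Prod>i\<in>S. (real n * u i) ^ t i / real (t i) ^ t i / sqrt (real (t i) + 1/4) / 2)"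
      using np upos
      by (intro mult_left_mono prod_mono conjI factor_bound) (auto intro!: less_imp_le)
    also have "(\<Prod>i\<in>S. (real n * u i) ^ t i / real (t i) ^ t i / sqrt (real (t i) + 1/4) / 2)
             = (\<Prod>i\<in>S. G i / 2 * exp (real n * u i - real (t i)))"
    proof (rule prod.cong[OF refl])
      fix i
      have "exp (real (t i) - real n * u i) * exp (real n * u i - real (t i)) = 1"
        by (simp add: exp_add[symmetric])
      then show "(real n * u i) ^ t i / real (t i) ^ t i / sqrt (real (t i) + 1/4) / 2
             = G i / 2 * exp (real n * u i - real (t i))"
        unfolding G_def by (simp add: field_simps)
    qed
    also have "\<dots> = (\<Prod>i\<in>S. G i / 2) * exp (\<Sum>i\<in>S. real n * u i - real (t i))"
      using fS by (simp only: prod.distrib exp_sum)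
    also have "(\<Sum>i\<in>S. real n * u i - real (t i)) = 0"
    proof -
      have "(\<Sum>i\<in>S. real n * u i - real (t i)) = real n * (\<Sum>i\<in>S. u i) - real (\<Sum>i\<in>S. t i)"
        by (simp add: sum_subtractf sum_distrib_left)
      then show ?thesis using uS tS by simp
    qed
    also have "(\<Prod>i\<in>S. G i / 2) * exp 0 \<le> (\<Prod>i\<in>S. sqrt (2 / (real n * u i)) / 2)"
      using Gb G0 by (simp, intro prod_mono) auto
    also have "(\<Prod>i\<in>S. sqrt (2 / (real n * u i)) / 2) = (\<Prod>i\<in>S. (1 / (sqrt 2 * sqrt n)) * (1 / sqrt (u i)))"
    proof (rule prod.cong[OF refl])
      fix i assume "i \<in> S"
      have s2: "sqrt 2 * sqrt 2 = (2::real)" by simp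
      show "sqrt (2 / (real n * u i)) / 2 = (1 / (sqrt 2 * sqrt n)) * (1 / sqrt (u i))"
        using upos[OF \<open>i \<in> S\<close>] np
        by (simp add: real_sqrt_divide real_sqrt_mult field_simps)
    qed
    also have "\<dots> = (1 / (sqrt 2 * sqrt n)) ^ k / sqrt (\<Prod>i\<in>S. u i)"
      by (simp add: prod.distrib k_def prod_sqrt[symmetric] prod_dividef power_one_over)
    finally have M: "multinomial_prob q n u t \<le> exp 1 * sqrt n * ((1 / (sqrt 2 * sqrt n)) ^ k / sqrt (\<Prod>i\<in>S. u i))"
      using np by (simp add: mult_left_mono)
    have kk: "k \<ge> 1" using k1 by (simp add: k_def S_def)
    have s2: "sqrt 2 \<ge> (1.4::real)" by (rule real_le_rsqrt) (simp add: power2_eq_square)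
    have "sqrt 2 ^ k \<ge> sqrt (2::real) ^ 1" using kk by (intro power_increasing) auto
    then have e2k: "exp 1 \<le> 2 * sqrt 2 ^ k" using s2 e_less_272 by simp
    define r where "r = sqrt (real n)"
    have rp: "r > 0" using np by (simp add: r_def)
    have pw: "real n powr ((real k - 1) / 2) = r ^ (k - 1)" using powr_half[of n k] n1 kk by (simp add: r_def)
    have rk: "r ^ k = r * r ^ (k - 1)" using kk by (metis Suc_diff_1 less_le_trans power_Suc zero_less_one)
    define Q where "Q = sqrt (\<Prod>i\<in>S. u i)"
    have Qp: "Q > 0" using Ppos by (simp add: Q_def)
    have "exp 1 * r * ((1 / (sqrt 2 * r)) ^ k / Q) = exp 1 / (sqrt 2 ^ k * r ^ (k - 1) * Q)"
      using rp Qp by (simp add: power_divide power_mult_distrib rk field_simps)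
    also have "\<dots> \<le> 2 * sqrt 2 ^ k / (sqrt 2 ^ k * r ^ (k - 1) * Q)"
      using rp Qp e2k by (intro divide_right_mono) auto
    also have "\<dots> = 2 / (r ^ (k - 1) * Q)" by simp
    finally show ?thesis using M by (simp add: r_def[symmetric] Q_def[symmetric] pw S_def[symmetric] k_def[symmetric])
  qed
qed



lemma ev_big: "eventually (\<lambda>a::real. 2 * exp (- a / 16) \<le> sqrt (2 / a)) at_top"
  by real_asymp

lemma ev_big_seq:
  assumes c: "c > 0"
  shows "eventually (\<lambda>n. 2 * exp (- (real n * c) / 16) \<le> sqrt (2 / (real n * c))) sequentially"
proof -
  obtain A where A: "\<And>a. a \<ge> A \<Longrightarrow> 2 * exp (- a / 16) \<le> sqrt (2 / a)"
    using ev_big by (auto simp: eventually_at_top_linorder)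
  obtain N :: nat where N: "A / c < real N" using reals_Archimedean2 by blast
  show ?thesis unfolding eventually_sequentially
  proof (intro exI allI impI)
    fix n assume "N \<le> n"
    then have "A / c \<le> real n" using N by linarith
    then have "A \<le> real n * c" using c by (simp add: field_simps)
    then show "2 * exp (- (real n * c) / 16) \<le> sqrt (2 / (real n * c))" by (rule A)
  qed
qed

theorem corollary2:
  fixes q k :: nat and u :: "nat \<Rightarrow> real"
  assumes "q \<ge> 2" and "1 \<le> k" and "k \<le> q"
    and "\<forall>i\<in>{1..q}. u i \<ge> 0" and "(\<Sum>i\<in>{1..q}. u i) = 1"
    and "card (supp q u) = k"
  shows "\<exists>N. \<forall>n\<ge>N. \<forall>t\<in>compositions q n.
           multinomial_prob q n u t
             \<le> 2 / (real n powr ((real k - 1) / 2) * sqrt (\<Prod>i\<in>supp q u. u i))"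
proof -
  have fS: "finite (supp q u)" by (simp add: supp_def)
  have "eventually (\<lambda>n. \<forall>i\<in>supp q u. 2 * exp (- (real n * u i) / 16) \<le> sqrt (2 / (real n * u i))) sequentially"
    by (rule eventually_ball_finite[OF fS], rule ballI, rule ev_big_seq) (simp add: supp_def)
  moreover have "eventually (\<lambda>n::nat. n \<ge> 1) sequentially" by (rule eventually_ge_at_top)
  ultimately have "eventually (\<lambda>n. n \<ge> 1 \<and> (\<forall>i\<in>supp q u. 2 * exp (- (real n * u i) / 16) \<le> sqrt (2 / (real n * u i)))) sequentially"
    by (rule eventually_conj[rotated])
  then obtain N where N: "\<And>n. n \<ge> N \<Longrightarrow> n \<ge> 1 \<and> (\<forall>i\<in>supp q u. 2 * exp (- (real n * u i) / 16) \<le> sqrt (2 / (real n * u i)))"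
    unfolding eventually_sequentially by blast
  show ?thesis
  proof (intro exI allI impI ballI)
    fix n t assume "N \<le> n" "t \<in> compositions q n"
    then show "multinomial_prob q n u t
             \<le> 2 / (real n powr ((real k - 1) / 2) * sqrt (\<Prod>i\<in>supp q u. u i))"
      using main_bound[of q u n t] N[of n] assms by simp
  qed
qed

end
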